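(* Let $\mathbb{H}$ be a Hilbert space with norm $\|\cdot\|$, $f\in\mathbb{H}$, and let $D$ be a finite or infinite dictionary of elements of $\mathbb{H}$. For $\lambda\ge0$ and $\delta>0$ define $$L_D(f,\lambda)=\inf_{h\in\mathcal{L}_1(D)}\big(\|f-h\|^2+\lambda\|h\|_{\mathcal{L}_1(D)}\big),\qquad K_D(f,\delta)=\inf_{h\in\mathcal{L}_1(D)}\big(\|f-h\|+\delta\|h\|_{\mathcal{L}_1(D)}\big).$$ Then for every $\lambda\ge0$, $$\frac12\inf_{\delta>0}\Big(K_D^2(f,\delta)+\frac{\lambda^2}{2\delta^2}\Big)\le L_D(f,\lambda)\le\inf_{\delta>0}\Big(K_D^2(f,\delta)+\frac{\lambda^2}{4\delta^2}\Big).$$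
   Context: $\mathcal{L}_1(D)$ denotes the set of $h\in\mathbb{H}$ which can be written $h=\sum_{\phi\in D}\theta_\phi\phi$ with $\sum_{\phi\in D}|\theta_\phi|<\infty$, equipped with $\|h\|_{\mathcal{L}_1(D)}=\inf\{\sum_{\phi\in D}|\theta_\phi|:h=\sum_{\phi\in D}\theta_\phi\phi\}$. *)

theory Defs
  imports "HOL-Analysis.Analysis"
begin

definition l1_reps :: "'a::real_normed_vector set \<Rightarrow> 'a \<Rightarrow> ('a \<Rightarrow> real) set" where
  "l1_reps D h = {\<theta>. ((\<lambda>\<phi>. \<bar>\<theta> \<phi>\<bar>) summable_on D) \<and> ((\<lambda>\<phi>. \<theta> \<phi> *\<^sub>R \<phi>) has_sum h) D}"

definition L1 :: "'a::real_normed_vector set \<Rightarrow> 'a set" where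
  "L1 D = {h. l1_reps D h \<noteq> {}}"

definition L1_norm :: "'a::real_normed_vector set \<Rightarrow> 'a \<Rightarrow> real" where
  "L1_norm D h = Inf ((\<lambda>\<theta>. \<Sum>\<^sub>\<infinity>\<phi>\<in>D. \<bar>\<theta> \<phi>\<bar>) ` l1_reps D h)"

definition L_D :: "'a::real_normed_vector set \<Rightarrow> 'a \<Rightarrow> real \<Rightarrow> real" where
  "L_D D f lam = (INF h\<in>L1 D. (norm (f - h))\<^sup>2 + lam * L1_norm D h)"

definition K_D :: "'a::real_normed_vector set \<Rightarrow> 'a \<Rightarrow> real \<Rightarrow> real" where
  "K_D D f \<delta> = (INF h\<in>L1 D. norm (f - h) + \<delta> * L1_norm D h)"

end

theory Submission
  imports Defs
begin

lemma zero_L1: "0 \<in> L1 D"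
proof -
  have "(\<lambda>_. 0) \<in> l1_reps D 0" unfolding l1_reps_def by simp
  then show ?thesis unfolding L1_def by blast
qed

lemma L1_norm_nonneg: "h \<in> L1 D \<Longrightarrow> 0 \<le> L1_norm D h"
  unfolding L1_norm_def L1_def
  by (rule cInf_greatest) (auto intro: infsum_nonneg)

lemma K_nonneg:
  assumes "\<delta> > 0" shows "0 \<le> K_D D f \<delta>"
  unfolding K_D_def
  using zero_L1[of D] assms
  by (intro cINF_greatest) (auto intro!: add_nonneg_nonneg mult_nonneg_nonneg L1_norm_nonneg)

lemma K_le:
  assumes "\<delta> > 0" "h \<in> L1 D" shows "K_D D f \<delta> \<le> norm (f - h) + \<delta> * L1_norm D h"
  unfolding K_D_def
proof (rule cINF_lower[OF _ assms(2)])
  show "bdd_below ((\<lambda>h. norm (f - h) + \<delta> * L1_norm D h) ` L1 D)"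
    using assms by (intro bdd_belowI[where m=0]) (auto intro!: add_nonneg_nonneg mult_nonneg_nonneg L1_norm_nonneg)
qed

lemma choose_delta:
  fixes N lam e :: real
  assumes "N \<ge> 0" "lam \<ge> 0" "e > 0"
  shows "\<exists>\<delta>>0. \<delta>\<^sup>2 * N\<^sup>2 + lam\<^sup>2 / (4 * \<delta>\<^sup>2) \<le> lam * N + e"
proof (cases "lam = 0")
  case True
  define d where "d = sqrt e / (N + 1)"
  have d: "d > 0" using assms unfolding d_def by simp
  have "d\<^sup>2 * N\<^sup>2 = e * (N / (N+1))\<^sup>2"
    using assms unfolding d_def by (simp add: power_divide field_simps)
  also have "\<dots> \<le> e * 1"
    using assms by (intro mult_left_mono) (auto simp: power_le_one_iff)
  finally show ?thesis using d True by (intro exI[of _ d]) auto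
next
  case False
  then have lp: "lam > 0" using assms by simp
  show ?thesis
  proof (cases "N = 0")
    case True
    define d where "d = lam / (2 * sqrt e)"
    have d: "d > 0" using assms lp unfolding d_def by simp
    have "lam\<^sup>2 / (4 * d\<^sup>2) = e"
      using assms lp unfolding d_def by (simp add: power_divide power_mult_distrib field_simps)
    then show ?thesis using d True assms by (intro exI[of _ d]) auto
  next
    case False
    then have Np: "N > 0" using assms by simp
    define d where "d = sqrt (lam / (2 * N))"
    have d: "d > 0" using Np lp unfolding d_def by simp
    have d2: "d\<^sup>2 = lam / (2*N)" unfolding d_def using Np lp by simp
    have "d\<^sup>2 * N\<^sup>2 + lam\<^sup>2 / (4 * d\<^sup>2) = lam * N"
      unfolding d2 using Np lp by (simp add: power2_eq_square field_simps)
    then show ?thesis using d assms by (intro exI[of _ d]) auto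
  qed
qed

theorem lemma5p1:
  fixes D :: "'a::{real_inner, complete_space} set" and f :: 'a and lam :: real
  assumes "lam \<ge> 0"
  shows "(1/2) * (INF \<delta>\<in>{0<..}. (K_D D f \<delta>)\<^sup>2 + lam\<^sup>2 / (2 * \<delta>\<^sup>2)) \<le> L_D D f lam \<and>
         L_D D f lam \<le> (INF \<delta>\<in>{0<..}. (K_D D f \<delta>)\<^sup>2 + lam\<^sup>2 / (4 * \<delta>\<^sup>2))"
proof
  define G where "G = (INF \<delta>\<in>{0<..}. (K_D D f \<delta>)\<^sup>2 + lam\<^sup>2 / (2 * \<delta>\<^sup>2))"
  have Gle: "G \<le> (K_D D f \<delta>)\<^sup>2 + lam\<^sup>2 / (2 * \<delta>\<^sup>2)" if "\<delta> > 0" for \<delta> :: real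
    unfolding G_def
  proof (rule cINF_lower)
    show "bdd_below ((\<lambda>\<delta>. (K_D D f \<delta>)\<^sup>2 + lam\<^sup>2 / (2 * \<delta>\<^sup>2)) ` {0<..})"
      by (intro bdd_belowI[where m=0]) auto
  qed (use that in auto)
  have main: "(1/2) * G \<le> (norm (f - h))\<^sup>2 + lam * L1_norm D h" if h: "h \<in> L1 D" for h
  proof (rule field_le_epsilon)
    fix e :: real assume e: "e > 0"
    define a where "a = norm (f - h)"
    define N where "N = L1_norm D h"
    have a0: "a \<ge> 0" unfolding a_def by simp
    have N0: "N \<ge> 0" unfolding N_def using h by (rule L1_norm_nonneg)
    obtain \<delta> where dp: "\<delta> > 0" and dle: "\<delta>\<^sup>2 * N\<^sup>2 + lam\<^sup>2 / (4 * \<delta>\<^sup>2) \<le> lam * N + e"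
      using choose_delta[OF N0 assms e] by blast
    have K0: "0 \<le> K_D D f \<delta>" using K_nonneg[OF dp] .
    have Kle: "K_D D f \<delta> \<le> a + \<delta> * N" using K_le[OF dp h] unfolding a_def N_def .
    have "(K_D D f \<delta>)\<^sup>2 \<le> (a + \<delta> * N)\<^sup>2" using K0 Kle by (intro power_mono) auto
    also have "\<dots> \<le> 2 * a\<^sup>2 + 2 * (\<delta>\<^sup>2 * N\<^sup>2)"
      using sum_squares_ge_zero[of "a - \<delta>*N" 0] by (simp add: power2_eq_square algebra_simps)
    finally have Ksq: "(K_D D f \<delta>)\<^sup>2 \<le> 2 * a\<^sup>2 + 2 * (\<delta>\<^sup>2 * N\<^sup>2)" .
    have eq: "lam\<^sup>2 / (2 * \<delta>\<^sup>2) = 2 * (lam\<^sup>2 / (4 * \<delta>\<^sup>2))" using dp by (simp add: field_simps)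
    have "(1/2) * G \<le> (1/2) * ((K_D D f \<delta>)\<^sup>2 + lam\<^sup>2 / (2 * \<delta>\<^sup>2))"
      using Gle[OF dp] by simp
    also have "\<dots> \<le> a\<^sup>2 + (\<delta>\<^sup>2 * N\<^sup>2 + lam\<^sup>2 / (4 * \<delta>\<^sup>2))" using Ksq unfolding eq by simp
    also have "\<dots> \<le> a\<^sup>2 + lam * N + e" using dle by simp
    finally show "(1/2) * G \<le> (norm (f - h))\<^sup>2 + lam * L1_norm D h + e" unfolding a_def N_def .
  qed
  show "(1/2) * G \<le> L_D D f lam"
    unfolding L_D_def using zero_L1[of D] main by (intro cINF_greatest) auto
next
  have "L_D D f lam \<le> (K_D D f \<delta>)\<^sup>2 + lam\<^sup>2 / (4 * \<delta>\<^sup>2)" if dp: "\<delta> > 0" for \<delta> :: real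
  proof -
    define c where "c = lam\<^sup>2 / (4 * \<delta>\<^sup>2)"
    have Lbd: "L_D D f lam \<le> (norm (f - h))\<^sup>2 + lam * L1_norm D h" if h: "h \<in> L1 D" for h
      unfolding L_D_def
    proof (rule cINF_lower[OF _ h])
      show "bdd_below ((\<lambda>h. (norm (f - h))\<^sup>2 + lam * L1_norm D h) ` L1 D)"
        using assms by (intro bdd_belowI[where m=0]) (auto intro!: add_nonneg_nonneg mult_nonneg_nonneg L1_norm_nonneg)
    qed
    have step: "sqrt (max 0 (L_D D f lam - c)) \<le> norm (f - h) + \<delta> * L1_norm D h" if h: "h \<in> L1 D" for h
    proof -
      define a where "a = norm (f - h)"
      define N where "N = L1_norm D h"
      have a0: "a \<ge> 0" unfolding a_def by simp
      have N0: "N \<ge> 0" unfolding N_def using h by (rule L1_norm_nonneg)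
      have amgm: "lam * N \<le> \<delta>\<^sup>2 * N\<^sup>2 + c"
      proof -
        have "0 \<le> (\<delta> * N - lam / (2*\<delta>))\<^sup>2" by simp
        also have "\<dots> = \<delta>\<^sup>2 * N\<^sup>2 + c - lam * N"
          unfolding c_def using dp by (simp add: power2_eq_square field_simps)
        finally show ?thesis by simp
      qed
      have "L_D D f lam - c \<le> a\<^sup>2 + \<delta>\<^sup>2 * N\<^sup>2"
        using Lbd[OF h] amgm unfolding a_def N_def by simp
      also have "\<dots> \<le> (a + \<delta> * N)\<^sup>2"
        using a0 N0 dp by (simp add: power2_eq_square algebra_simps)
      finally have "max 0 (L_D D f lam - c) \<le> (a + \<delta> * N)\<^sup>2" by simp
      then have "sqrt (max 0 (L_D D f lam - c)) \<le> sqrt ((a + \<delta> * N)\<^sup>2)"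
        by (rule real_sqrt_le_mono)
      also have "\<dots> = a + \<delta> * N" using a0 N0 dp by simp
      finally show ?thesis unfolding a_def N_def .
    qed
    have "sqrt (max 0 (L_D D f lam - c)) \<le> K_D D f \<delta>"
      unfolding K_D_def using zero_L1[of D] step by (intro cINF_greatest) auto
    then have "(sqrt (max 0 (L_D D f lam - c)))\<^sup>2 \<le> (K_D D f \<delta>)\<^sup>2"
      by (intro power_mono) auto
    then have "max 0 (L_D D f lam - c) \<le> (K_D D f \<delta>)\<^sup>2" by simp
    then show ?thesis unfolding c_def by simp
  qed
  then show "L_D D f lam \<le> (INF \<delta>\<in>{0<..}. (K_D D f \<delta>)\<^sup>2 + lam\<^sup>2 / (4 * \<delta>\<^sup>2))"
    by (intro cINF_greatest) auto
qed

end
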